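(* Let $d\ge2$ be even, $\mathcal I_d=\{-\tfrac d2,\ldots,\tfrac d2-1\}$, $\mathcal H_d$ with orthonormal basis $\{|j\rangle\}_{j\in\mathcal I_d}$, and $\mathcal R=G\circ\tilde G\circ G$ as defined in the context. Let $X\in\mathcal K$, written $X=\sum X^{i'j'}_{ij}|ij\rangle\langle i'j'|$. For every integer $\ell\ge1$, $\mathcal R^\ell(X)=\sum_{u\ne0}\xi^{(\ell)}_u\sum_a|a,a+u\rangle\langle a,a+u|+\sum_{u\ne0}\lambda^{(\ell)}_u\sum_a|a,a+u\rangle\langle a+u,a|+\eta^{(\ell)}\sum_a|aa\rangle\langle aa|$, where $u$ ranges over $\mathcal I_d\setminus\{0\}$, $a,i$ over $\mathcal I_d$, index additions are modulo $d$ in $\mathcal I_d$, and $\xi^{(\ell)}_u=\frac{\sum_iX^{i,i+u}_{i,i+u}}{d^{\ell+1}}+\frac{\sum_iX^{ii}_{ii}}{d^{\ell+1}}\cdot\frac{1-d^{-\ell}}{d-1}$, $\lambda^{(\ell)}_u=\frac{\sum_iX^{i+u,i}_{i,i+u}}{d^{\ell+1}}+\frac{\sum_iX^{ii}_{ii}}{d^{\ell+1}}\cdot\frac{1-d^{-\ell}}{d-1}$, $\eta^{(\ell)}=\frac{\sum_iX^{ii}_{ii}}{d^{2\ell+1}}$.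
   Context: $|ij\rangle=|i\rangle\otimes|j\rangle$; $\omega^x=e^{2\pi ix/d}$ for real $x$; $\hat Q=\sum_j j|j\rangle\langle j|$; $\widetilde{|k\rangle}=d^{-1/2}\sum_j\omega^{kj}|j\rangle$; $\hat P=\sum_k k\widetilde{|k\rangle}\widetilde{\langle k|}$; $V_{\alpha\beta}=\omega^{\alpha\hat Q+\beta\hat Q^2}$, $\tilde V_{\alpha\beta}=\omega^{\alpha\hat P+\beta\hat P^2}$; $G(X)=\mathbb E_{\alpha\beta}V_{\alpha\beta}^{\otimes2}X(V_{\alpha\beta}^\dagger)^{\otimes2}$, $\tilde G(X)=\mathbb E_{\alpha\beta}\tilde V_{\alpha\beta}^{\otimes2}X(\tilde V_{\alpha\beta}^\dagger)^{\otimes2}$ with $\alpha,\beta$ independent uniform on $[0,d)$. $I=\sum_{ab}|ab\rangle\langle ab|$, $F=\sum_{ab}|ab\rangle\langle ba|$; $\mathcal K$ is the orthogonal complement of $\mathrm{span}\{I,F\}$ in $\mathcal L(\mathcal H_d\otimes\mathcal H_d)$ with respect to the Hilbert–Schmidt inner product $\langle X,Y\rangle=\mathrm{Tr}X^\dagger Y$. *)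

theory Defs
  imports "HOL-Analysis.Analysis" "HOL-Library.Function_Algebras"
begin

definition Idx :: "nat \<Rightarrow> int set" where
  "Idx d = {- (int d div 2) ..< int d div 2}"

definition wrap :: "nat \<Rightarrow> int \<Rightarrow> int" where
  "wrap d x = ((x + int d div 2) mod int d) - int d div 2"

definition omega :: "nat \<Rightarrow> real \<Rightarrow> complex" where
  "omega d x = exp (2 * of_real pi * \<i> * of_real x / of_nat d)"

text \<open>Operators on H_d (matrices w.r.t. the basis |j>, j in I_d) and on
  H_d tensor H_d (matrices w.r.t. |ij> = |i> tensor |j>); entry M p q = <p|M|q>.
  Only entries with indices in I_d are meaningful.\<close>
type_synonym op1 = "int \<Rightarrow> int \<Rightarrow> complex"
type_synonym op2 = "int \<times> int \<Rightarrow> int \<times> int \<Rightarrow> complex"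

definition Idx2 :: "nat \<Rightarrow> (int \<times> int) set" where
  "Idx2 d = Idx d \<times> Idx d"

definition mult2 :: "nat \<Rightarrow> op2 \<Rightarrow> op2 \<Rightarrow> op2" where
  "mult2 d A B = (\<lambda>p q. \<Sum>r\<in>Idx2 d. A p r * B r q)"

definition adj2 :: "op2 \<Rightarrow> op2" where
  "adj2 A = (\<lambda>p q. cnj (A q p))"

definition tensor :: "op1 \<Rightarrow> op1 \<Rightarrow> op2" where
  "tensor A B = (\<lambda>(i, j) (i', j'). A i i' * B j j')"

definition smul2 :: "complex \<Rightarrow> op2 \<Rightarrow> op2" where
  "smul2 c A = (\<lambda>p q. c * A p q)"

definition ketbra2 :: "int \<times> int \<Rightarrow> int \<times> int \<Rightarrow> op2" where
  "ketbra2 p q = (\<lambda>p' q'. if p' = p \<and> q' = q then 1 else 0)"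

definition hs_inner :: "nat \<Rightarrow> op2 \<Rightarrow> op2 \<Rightarrow> complex" where
  "hs_inner d A B = (\<Sum>p\<in>Idx2 d. \<Sum>q\<in>Idx2 d. cnj (A q p) * B q p)"

definition Iop :: op2 where
  "Iop = (\<lambda>p q. if p = q then 1 else 0)"

definition Fop :: op2 where
  "Fop = (\<lambda>(a, b) q. if q = (b, a) then 1 else 0)"

definition Kspace :: "nat \<Rightarrow> op2 set" where
  "Kspace d = {X. hs_inner d Iop X = 0 \<and> hs_inner d Fop X = 0}"

text \<open>Fourier vector |k~> = d^(-1/2) sum_j omega^(kj) |j>, as a coordinate function.\<close>
definition fvec :: "nat \<Rightarrow> int \<Rightarrow> int \<Rightarrow> complex" where
  "fvec d k j = omega d (of_int (k * j)) / of_real (sqrt (real d))"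

text \<open>V_{ab} = omega^(a Q + b Q^2) = sum_j omega^(a j + b j^2) |j><j|
  (function of the diagonal operator Q).\<close>
definition Vop :: "nat \<Rightarrow> real \<Rightarrow> real \<Rightarrow> op1" where
  "Vop d a b = (\<lambda>j j'. if j = j' then omega d (a * of_int j + b * of_int j ^ 2) else 0)"

text \<open>V~_{ab} = omega^(a P + b P^2) = sum_k omega^(a k + b k^2) |k~><k~|
  (spectral decomposition of P = sum_k k |k~><k~|).\<close>
definition Vtop :: "nat \<Rightarrow> real \<Rightarrow> real \<Rightarrow> op1" where
  "Vtop d a b = (\<lambda>j j'. \<Sum>k\<in>Idx d.
      omega d (a * of_int k + b * of_int k ^ 2) * fvec d k j * cnj (fvec d k j'))"

definition unif2 :: "nat \<Rightarrow> (real \<times> real) measure" where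
  "unif2 d = uniform_measure lborel ({0..<real d} \<times> {0..<real d})"

definition twirl :: "nat \<Rightarrow> (real \<Rightarrow> real \<Rightarrow> op1) \<Rightarrow> op2 \<Rightarrow> op2" where
  "twirl d W X = (\<lambda>p q. \<integral>ab. (let U = tensor (W (fst ab) (snd ab)) (W (fst ab) (snd ab))
                                  in mult2 d (mult2 d U X) (adj2 U)) p q \<partial>unif2 d)"

definition Gmap :: "nat \<Rightarrow> op2 \<Rightarrow> op2" where
  "Gmap d = twirl d (Vop d)"

definition Gtmap :: "nat \<Rightarrow> op2 \<Rightarrow> op2" where
  "Gtmap d = twirl d (Vtop d)"

definition Rmap :: "nat \<Rightarrow> op2 \<Rightarrow> op2" where
  "Rmap d = Gmap d \<circ> Gtmap d \<circ> Gmap d"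

end

theory Submission
  imports Defs
begin

lemma omega_add: "omega d (x + y) = omega d x * omega d y"
  unfolding omega_def by (simp add: distrib_left distrib_right add_divide_distrib exp_add)

lemma omega_0[simp]: "omega d 0 = 1"
  unfolding omega_def by simp

lemma omega_cnj: "cnj (omega d x) = omega d (- x)"
  unfolding omega_def by (simp add: exp_cnj)

lemma omega_minus: "omega d (- x) * omega d x = 1"
  by (metis omega_add omega_0 add.left_inverse)

lemma omega_norm[simp]: "cmod (omega d x) = 1"
  unfolding omega_def by (simp add: norm_exp_eq_Re)

lemma omega_int_eq_1:
  assumes "d > 0"
  shows "omega d (of_int c) = 1 \<longleftrightarrow> int d dvd c"
proof -
  have "omega d (of_int c) = exp (\<i> * complex_of_real (2 * pi * of_int c / real d))"
    unfolding omega_def by (simp add: field_simps)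
  also have "\<dots> = 1 \<longleftrightarrow> (\<exists>n::int. 2 * pi * of_int c / real d = 2 * pi * of_int n)"
    by (simp add: exp_eq_1 mult_ac)
  also have "\<dots> \<longleftrightarrow> (\<exists>n::int. of_int c = real d * of_int n)"
    using assms by (auto simp: field_simps)
  also have "\<dots> \<longleftrightarrow> int d dvd c"
    by (metis (mono_tags, opaque_lifting) dvd_def of_int_eq_iff of_int_mult of_int_of_nat_eq)
  finally show ?thesis .
qed


lemma fin_Idx[simp]: "finite (Idx d)" unfolding Idx_def by simp

context fixes d :: nat assumes d2: "d \<ge> 2" and ev: "even d"
begin

lemma dpos: "d > 0" using d2 by simp

lemma h2: "int d = 2 * (int d div 2)" using ev by (auto elim: evenE)

lemma card_Idx: "card (Idx d) = d"
  unfolding Idx_def using h2 by simp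


lemma wrap_in: "wrap d x \<in> Idx d"
proof -
  have "0 \<le> (x + int d div 2) mod int d" "(x + int d div 2) mod int d < int d" using dpos by auto
  then show ?thesis unfolding wrap_def Idx_def using h2 by auto
qed

lemma wrap_id: "x \<in> Idx d \<Longrightarrow> wrap d x = x"
  unfolding wrap_def Idx_def using h2 by (auto simp: mod_pos_pos_trivial)

lemma wrap_mod: "wrap d x mod int d = x mod int d"
  unfolding wrap_def by (simp add: mod_diff_left_eq mod_add_left_eq) 

lemma wrap_eq_iff: "wrap d x = wrap d y \<longleftrightarrow> x mod int d = y mod int d"
proof
  assume "wrap d x = wrap d y" then show "x mod int d = y mod int d" by (metis wrap_mod)
next
  assume "x mod int d = y mod int d"
  then have "(x + int d div 2) mod int d = (y + int d div 2) mod int d" by (metis mod_add_left_eq)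
  then show "wrap d x = wrap d y" by (simp add: wrap_def)
qed

lemma wrap_bij: "bij_betw (\<lambda>k. wrap d (k + t)) (Idx d) (Idx d)"
proof -
  have inj: "inj_on (\<lambda>k. wrap d (k + t)) (Idx d)"
  proof (rule inj_onI)
    fix x y assume x: "x \<in> Idx d" and y: "y \<in> Idx d" and e: "wrap d (x + t) = wrap d (y + t)"
    then have "(x + t) mod int d = (y + t) mod int d" by (simp add: wrap_eq_iff)
    then have "x mod int d = y mod int d" by (metis add_diff_cancel_right' mod_diff_left_eq)
    then have "wrap d x = wrap d y" by (simp add: wrap_eq_iff)
    then show "x = y" using x y by (simp add: wrap_id)
  qed
  have "(\<lambda>k. wrap d (k + t)) ` Idx d \<subseteq> Idx d" using wrap_in by auto
  moreover have "card ((\<lambda>k. wrap d (k + t)) ` Idx d) = card (Idx d)" using inj by (simp add: card_image)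
  ultimately have "(\<lambda>k. wrap d (k + t)) ` Idx d = Idx d" by (simp add: card_subset_eq)
  then show ?thesis using inj by (simp add: bij_betw_def)
qed

lemma wrap_periodic:
  assumes "\<And>x y. x mod int d = y mod int d \<Longrightarrow> f x = f y"
  shows "f (wrap d x) = f x"
  using assms wrap_mod by blast

lemma sum_shift:
  assumes "\<And>x y. x mod int d = y mod int d \<Longrightarrow> f x = f y"
  shows "(\<Sum>k\<in>Idx d. f (k + t)) = (\<Sum>k\<in>Idx d. f k)"
proof -
  have "(\<Sum>k\<in>Idx d. f (k + t)) = (\<Sum>k\<in>Idx d. f (wrap d (k + t)))"
    using wrap_periodic[of f, OF assms] by simp
  also have "\<dots> = (\<Sum>k\<in>Idx d. f k)"
    using sum.reindex_bij_betw[OF wrap_bij[of t], of f] by simp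
  finally show ?thesis .
qed

lemma omega_int_mod:
  assumes "x mod int d = y mod int d"
  shows "omega d (of_int (x * c)) = omega d (of_int (y * c))"
proof -
  obtain k where "x = y + int d * k"
    using assms by (metis mod_eqE mult.commute add.commute diff_add_cancel dvd_def)
  then have "x * c = y * c + int d * (k * c)" by (simp add: algebra_simps)
  then have "omega d (of_int (x * c)) = omega d (of_int (y * c)) * omega d (of_int (int d * (k * c)))"
    by (simp add: omega_add[symmetric])
  moreover have "omega d (of_int (int d * (k * c))) = 1"
    by (simp only: omega_int_eq_1[OF dpos] dvd_triv_left)
  ultimately show ?thesis by simp
qed

lemma char_sum: "(\<Sum>k\<in>Idx d. omega d (of_int (k * c))) = (if int d dvd c then of_nat d else 0)"
proof (cases "int d dvd c")
  case True
  then have "\<And>k. omega d (of_int (k * c)) = 1" by (simp only: omega_int_eq_1[OF dpos] dvd_mult)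
  then show ?thesis using True card_Idx by simp
next
  case False
  let ?S = "\<Sum>k\<in>Idx d. omega d (of_int (k * c))"
  have "?S = (\<Sum>k\<in>Idx d. omega d (of_int ((k + 1) * c)))"
    by (rule sum_shift[symmetric]) (rule omega_int_mod)
  also have "\<dots> = omega d (of_int c) * ?S"
    by (simp add: sum_distrib_left distrib_right omega_add[symmetric] algebra_simps)
  finally have "(1 - omega d (of_int c)) * ?S = 0" by (simp add: algebra_simps)
  moreover have "omega d (of_int c) \<noteq> 1" using False omega_int_eq_1[OF dpos] by simp
  ultimately show ?thesis using False by simp
qed

end


lemma omega_cont: "continuous_on S (\<lambda>x::real. omega d (x * c))"
  unfolding omega_def divide_inverse by (intro continuous_intros)

lemma J_int:
  fixes m :: int
  assumes "d > 0"
  shows "((\<lambda>x. omega d (x * of_int m)) has_integral (if m = 0 then of_nat d else 0)) {0..<real d}"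
proof -
  have neg: "negligible {real d}" by simp
  have key: "((\<lambda>x. omega d (x * of_int m)) has_integral (if m = 0 then of_nat d else 0)) {0..real d}"
  proof (cases "m = 0")
    case True
    then show ?thesis using has_integral_const_real[of "1::complex" 0 "real d"] by (simp add: scaleR_conv_of_real)
  next
    case False
    define c where "c = 2 * of_real pi * \<i> * of_int m / (of_nat d :: complex)"
    have c0: "c \<noteq> 0" using False assms by (simp add: c_def)
    have om: "omega d (x * of_int m) = exp (of_real x * c)" for x
      unfolding omega_def c_def by (simp add: field_simps)
    define F where "F x = exp (of_real x * c) / c" for x :: real
    have der: "(F has_vector_derivative exp (of_real x * c)) (at x within {0..real d})" for x
    proof -
      have "((\<lambda>z. exp (z * c) / c) has_field_derivative exp (of_real x * c)) (at (of_real x))"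
        using c0 by (auto intro!: derivative_eq_intros)
      then show ?thesis unfolding F_def by (rule has_vector_derivative_real_field)
    qed
    have "((\<lambda>x. exp (of_real x * c)) has_integral (F (real d) - F 0)) {0..real d}"
      by (rule fundamental_theorem_of_calculus) (auto intro: der)
    moreover have "F (real d) = F 0"
    proof -
      have "exp (of_real (real d) * c) = exp (2 * pi * \<i> * of_int m)"
        using assms by (simp add: c_def)
      also have "\<dots> = 1" by (simp add: exp_eq_1)
      finally show ?thesis by (simp add: F_def)
    qed
    ultimately show ?thesis using False by (simp add: om)
  qed
  show ?thesis
    using key by (subst has_integral_spike_set_eq[where T="{0..real d}"]) (auto intro: negligible_subset[OF neg])
qed


lemma J_leb:
  fixes m :: int
  assumes "d > 0"
  shows "integrable lborel (\<lambda>x. indicator {0..<real d} x *\<^sub>R omega d (x * of_int m))"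
    and "(\<integral>x. indicator {0..<real d} x *\<^sub>R omega d (x * of_int m) \<partial>lborel) = (if m = 0 then of_nat d else 0)"
proof -
  have si: "set_integrable lborel {0..<real d} (\<lambda>x. omega d (x * of_int m))"
    by (rule set_integrable_subset[OF borel_integrable_atLeastAtMost'[OF omega_cont, of 0 "real d"]]) auto
  then show "integrable lborel (\<lambda>x. indicator {0..<real d} x *\<^sub>R omega d (x * of_int m))"
    by (simp add: set_integrable_def)
  have "(LINT x:{0..<real d}|lborel. omega d (x * of_int m)) = integral {0..<real d} (\<lambda>x. omega d (x * of_int m))"
    by (rule set_borel_integral_eq_integral(2)[OF si])
  also have "\<dots> = (if m = 0 then of_nat d else 0)"
    using J_int[OF assms] by (rule integral_unique)
  finally show "(\<integral>x. indicator {0..<real d} x *\<^sub>R omega d (x * of_int m) \<partial>lborel) = (if m = 0 then of_nat d else 0)"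
    by (simp add: set_lebesgue_integral_def)
qed

lemma omega_meas2: "(\<lambda>ab::real\<times>real. omega d (fst ab * of_int n + snd ab * of_int m)) \<in> borel_measurable borel"
  by (rule borel_measurable_continuous_onI) (unfold omega_def divide_inverse, intro continuous_intros)

lemma emeasure_sq: "emeasure lborel ({0..<real d} \<times> {0..<real d}) = ennreal (real d ^ 2)"
proof -
  have "emeasure lborel ({0..<real d} \<times> {0..<real d}) = emeasure (lborel \<Otimes>\<^sub>M lborel) ({0..<real d} \<times> {0..<real d})"
    by (simp add: lborel_prod)
  also have "\<dots> = emeasure lborel {0..<real d} * emeasure lborel {0..<real d}"
    by (rule lborel.emeasure_pair_measure_Times) auto
  also have "\<dots> = ennreal (real d ^ 2)" by (simp add: ennreal_mult power2_eq_square)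
  finally show ?thesis .
qed

lemma unif2_integral:
  fixes n m :: int
  assumes "d > 0"
  shows "integrable (unif2 d) (\<lambda>ab. omega d (fst ab * of_int n + snd ab * of_int m))" (is ?A)
    and "(\<integral>ab. omega d (fst ab * of_int n + snd ab * of_int m) \<partial>unif2 d) = (if n = 0 \<and> m = 0 then 1 else 0)" (is ?B)
proof -
  define S where "S = {0..<real d} \<times> {0..<real d}"
  define I where "I = {0..<real d}"
  define f where "f ab = omega d (fst ab * of_int n + snd ab * of_int m)" for ab :: "real \<times> real"
  define g where "g x = indicator S x / real d ^ 2" for x :: "real \<times> real"
  have fm: "f \<in> borel_measurable lborel" unfolding f_def using omega_meas2 by simp
  have Ssets: "S \<in> sets lborel" unfolding S_def lborel_prod[symmetric] by (intro pair_measureI) auto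
  have U: "unif2 d = density lborel (\<lambda>x. ennreal (g x))"
    unfolding unif2_def uniform_measure_def S_def[symmetric]
  proof (rule arg_cong[where f="density lborel"], rule ext)
    fix x
    have e: "1 / ennreal (real d ^ 2) = ennreal (1 / real d ^ 2)"
      using divide_ennreal[of 1 "real d^2"] assms by simp
    show "indicator S x / emeasure lborel S = ennreal (g x)"
      unfolding S_def emeasure_sq g_def using assms e
      by (auto simp: indicator_def)
  qed
  have gm: "g \<in> borel_measurable lborel" unfolding g_def using Ssets by measurable
  have gnn: "AE x in lborel. 0 \<le> g x" unfolding g_def by simp
  have intS: "integrable lborel (\<lambda>x. indicator S x *\<^sub>R f x)"
    by (rule integrableI_bounded_set_indicator[where B=1, OF Ssets fm])
       (auto simp: S_def emeasure_sq f_def)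
  have int: "integrable lborel (\<lambda>x. g x *\<^sub>R f x)"
  proof -
    have "integrable lborel (\<lambda>x. (1 / real d ^ 2) *\<^sub>R (indicator S x *\<^sub>R f x))"
      using intS by (rule integrable_scaleR_right)
    then show ?thesis by (simp add: g_def)
  qed
  show ?A unfolding U f_def[symmetric]
    using int gm gnn fm by (simp add: integrable_density)
  have "(\<integral>ab. f ab \<partial>unif2 d) = (\<integral>x. g x *\<^sub>R f x \<partial>lborel)"
    unfolding U by (rule integral_density[OF fm gm gnn])
  also have "\<dots> = (\<integral>x. g x *\<^sub>R f x \<partial>(lborel \<Otimes>\<^sub>M lborel))"
    by (simp add: lborel_prod)
  also have "\<dots> = (\<integral>x. (\<integral>y. g (x, y) *\<^sub>R f (x, y) \<partial>lborel) \<partial>lborel)"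
    by (rule lborel_pair.integral_fst'[symmetric]) (simp add: lborel_prod int)
  also have "\<dots> = (\<integral>x. (indicator I x *\<^sub>R omega d (x * of_int n)) * (inverse (of_nat d ^ 2) *
                    (\<integral>y. indicator I y *\<^sub>R omega d (y * of_int m) \<partial>lborel)) \<partial>lborel)"
  proof (rule Bochner_Integration.integral_cong[OF refl])
    fix x :: real
    have eq: "(\<lambda>y. g (x, y) *\<^sub>R f (x, y)) = (\<lambda>y. ((indicator I x *\<^sub>R omega d (x * of_int n)) * inverse (of_nat d ^ 2)) * (indicator I y *\<^sub>R omega d (y * of_int m)))"
      by (rule ext) (simp add: g_def f_def S_def I_def omega_add indicator_def scaleR_conv_of_real divide_inverse)
    show "(\<integral>y. g (x, y) *\<^sub>R f (x, y) \<partial>lborel) = (indicator I x *\<^sub>R omega d (x * of_int n)) * (inverse (of_nat d ^ 2) *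
                    (\<integral>y. indicator I y *\<^sub>R omega d (y * of_int m) \<partial>lborel))"
      by (simp only: eq integral_mult_right_zero mult.assoc)
  qed
  also have "\<dots> = (\<integral>x. indicator I x *\<^sub>R omega d (x * of_int n) \<partial>lborel) * (inverse (of_nat d ^ 2) *
                    (\<integral>y. indicator I y *\<^sub>R omega d (y * of_int m) \<partial>lborel))"
    by (rule integral_mult_left_zero)
  also have "\<dots> = (if n = 0 \<and> m = 0 then 1 else 0)"
    unfolding I_def J_leb(2)[OF assms] using assms by (simp add: power2_eq_square field_simps)
  finally show ?B unfolding f_def .
qed


definition EE :: "(int \<Rightarrow> int \<Rightarrow> complex) \<Rightarrow> int \<times> int \<Rightarrow> int \<times> int \<Rightarrow> complex" where
  "EE e k p = e (fst k) (fst p) * e (snd k) (snd p)"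

definition hat :: "nat \<Rightarrow> (int \<Rightarrow> int \<Rightarrow> complex) \<Rightarrow> op2 \<Rightarrow> int \<times> int \<Rightarrow> int \<times> int \<Rightarrow> complex" where
  "hat d e X k k' = (\<Sum>r\<in>Idx2 d. \<Sum>s\<in>Idx2 d. cnj (EE e k r) * X r s * EE e k' s)"

definition pm :: "int \<times> int \<Rightarrow> int \<times> int \<Rightarrow> bool" where
  "pm k k' \<longleftrightarrow> fst k + snd k = fst k' + snd k' \<and> fst k ^ 2 + snd k ^ 2 = fst k' ^ 2 + snd k' ^ 2"

definition cc :: "nat \<Rightarrow> real \<Rightarrow> real \<Rightarrow> int \<times> int \<Rightarrow> complex" where
  "cc d a b k = omega d (a * of_int (fst k) + b * of_int (fst k) ^ 2) * omega d (a * of_int (snd k) + b * of_int (snd k) ^ 2)"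

definition Wrep :: "nat \<Rightarrow> (real \<Rightarrow> real \<Rightarrow> op1) \<Rightarrow> (int \<Rightarrow> int \<Rightarrow> complex) \<Rightarrow> bool" where
  "Wrep d W e \<longleftrightarrow> (\<forall>a b j j'. j \<in> Idx d \<longrightarrow> j' \<in> Idx d \<longrightarrow>
      W a b j j' = (\<Sum>k\<in>Idx d. omega d (a * of_int k + b * of_int k ^ 2) * e k j * cnj (e k j')))"

lemma fin_Idx2[simp]: "finite (Idx2 d)"
  unfolding Idx2_def Idx_def by simp

lemma cc_prod: "cc d a b k * cnj (cc d a b k') =
   omega d (a * of_int (fst k + snd k - fst k' - snd k') + b * of_int (fst k ^ 2 + snd k ^ 2 - fst k' ^ 2 - snd k' ^ 2))"
  unfolding cc_def by (simp add: omega_cnj omega_add[symmetric] algebra_simps)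

lemma U_expand:
  assumes W: "Wrep d W e"
    and p: "p \<in> Idx2 d" and s: "s \<in> Idx2 d"
  shows "tensor (W a b) (W a b) p s = (\<Sum>k\<in>Idx2 d. cc d a b k * (EE e k p * cnj (EE e k s)))"
proof -
  obtain p1 p2 s1 s2 where ps: "p = (p1, p2)" "s = (s1, s2)" by fastforce
  have i: "p1 \<in> Idx d" "p2 \<in> Idx d" "s1 \<in> Idx d" "s2 \<in> Idx d" using p s ps by (auto simp: Idx2_def)
  have "tensor (W a b) (W a b) p s = W a b p1 s1 * W a b p2 s2" by (simp add: tensor_def ps)
  also have "\<dots> = (\<Sum>k1\<in>Idx d. omega d (a * of_int k1 + b * of_int k1 ^ 2) * e k1 p1 * cnj (e k1 s1)) *
                  (\<Sum>k2\<in>Idx d. omega d (a * of_int k2 + b * of_int k2 ^ 2) * e k2 p2 * cnj (e k2 s2))"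
    using i W by (simp add: Wrep_def)
  also have "\<dots> = (\<Sum>k1\<in>Idx d. \<Sum>k2\<in>Idx d. (omega d (a * of_int k1 + b * of_int k1 ^ 2) * e k1 p1 * cnj (e k1 s1)) *
                  (omega d (a * of_int k2 + b * of_int k2 ^ 2) * e k2 p2 * cnj (e k2 s2)))"
    by (rule sum_product)
  also have "\<dots> = (\<Sum>k\<in>Idx d \<times> Idx d. (omega d (a * of_int (fst k) + b * of_int (fst k) ^ 2) * e (fst k) p1 * cnj (e (fst k) s1)) *
                  (omega d (a * of_int (snd k) + b * of_int (snd k) ^ 2) * e (snd k) p2 * cnj (e (snd k) s2)))"
    by (simp add: sum.cartesian_product split_def)
  also have "\<dots> = (\<Sum>k\<in>Idx2 d. cc d a b k * (EE e k p * cnj (EE e k s)))"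
    unfolding Idx2_def by (rule sum.cong) (auto simp: cc_def EE_def ps)
  finally show ?thesis .
qed

lemma sum4_swap: "(\<Sum>r\<in>A. \<Sum>s\<in>A. \<Sum>k\<in>B. \<Sum>k'\<in>B. f r s k k') = (\<Sum>k\<in>B. \<Sum>k'\<in>B. \<Sum>s\<in>A. \<Sum>r\<in>A. f r s k k')"
proof -
  have "(\<Sum>r\<in>A. \<Sum>s\<in>A. \<Sum>k\<in>B. \<Sum>k'\<in>B. f r s k k') = (\<Sum>r\<in>A. \<Sum>k\<in>B. \<Sum>s\<in>A. \<Sum>k'\<in>B. f r s k k')"
    by (rule sum.cong[OF refl], rule sum.swap)
  also have "\<dots> = (\<Sum>r\<in>A. \<Sum>k\<in>B. \<Sum>k'\<in>B. \<Sum>s\<in>A. f r s k k')"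
    by (rule sum.cong[OF refl], rule sum.cong[OF refl], rule sum.swap)
  also have "\<dots> = (\<Sum>k\<in>B. \<Sum>r\<in>A. \<Sum>k'\<in>B. \<Sum>s\<in>A. f r s k k')"
    by (rule sum.swap)
  also have "\<dots> = (\<Sum>k\<in>B. \<Sum>k'\<in>B. \<Sum>r\<in>A. \<Sum>s\<in>A. f r s k k')"
    by (rule sum.cong[OF refl], rule sum.swap)
  also have "\<dots> = (\<Sum>k\<in>B. \<Sum>k'\<in>B. \<Sum>s\<in>A. \<Sum>r\<in>A. f r s k k')"
    by (rule sum.cong[OF refl], rule sum.cong[OF refl], rule sum.swap)
  finally show ?thesis .
qed

lemma twirl_pointwise:
  assumes W: "Wrep d W e"
    and p: "p \<in> Idx2 d" and q: "q \<in> Idx2 d"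
  shows "mult2 d (mult2 d (tensor (W a b) (W a b)) X) (adj2 (tensor (W a b) (W a b))) p q =
    (\<Sum>k\<in>Idx2 d. \<Sum>k'\<in>Idx2 d. (cc d a b k * cnj (cc d a b k')) * (EE e k p * cnj (EE e k' q) * hat d e X k k'))"
proof -
  let ?U = "tensor (W a b) (W a b)"
  have "mult2 d (mult2 d ?U X) (adj2 ?U) p q = (\<Sum>r\<in>Idx2 d. (\<Sum>s\<in>Idx2 d. ?U p s * X s r) * cnj (?U q r))"
    by (simp add: mult2_def adj2_def)
  also have "\<dots> = (\<Sum>r\<in>Idx2 d. (\<Sum>s\<in>Idx2 d. (\<Sum>k\<in>Idx2 d. cc d a b k * (EE e k p * cnj (EE e k s))) * X s r) *
        cnj (\<Sum>k'\<in>Idx2 d. cc d a b k' * (EE e k' q * cnj (EE e k' r))))"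
    using p q by (intro sum.cong refl arg_cong2[where f="(*)"] arg_cong[where f=cnj]) (simp_all add: U_expand[OF W])
  also have "\<dots> = (\<Sum>r\<in>Idx2 d. \<Sum>s\<in>Idx2 d. \<Sum>k\<in>Idx2 d. \<Sum>k'\<in>Idx2 d.
        (cc d a b k * cnj (cc d a b k')) * (EE e k p * cnj (EE e k' q) * (cnj (EE e k s) * X s r * EE e k' r)))"
    by (simp add: sum_distrib_left sum_distrib_right mult_ac)
  also have "\<dots> = (\<Sum>k\<in>Idx2 d. \<Sum>k'\<in>Idx2 d. \<Sum>s\<in>Idx2 d. \<Sum>r\<in>Idx2 d.
        (cc d a b k * cnj (cc d a b k')) * (EE e k p * cnj (EE e k' q) * (cnj (EE e k s) * X s r * EE e k' r)))"
    by (rule sum4_swap)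
  also have "\<dots> = (\<Sum>k\<in>Idx2 d. \<Sum>k'\<in>Idx2 d. (cc d a b k * cnj (cc d a b k')) * (EE e k p * cnj (EE e k' q) * hat d e X k k'))"
    by (simp add: hat_def sum_distrib_left)
  finally show ?thesis .
qed


lemma twirl_formula:
  assumes W: "Wrep d W e"
    and p: "p \<in> Idx2 d" and q: "q \<in> Idx2 d" and d: "d > 0"
  shows "twirl d W X p q =
    (\<Sum>k\<in>Idx2 d. \<Sum>k'\<in>Idx2 d. if pm k k' then EE e k p * cnj (EE e k' q) * hat d e X k k' else 0)"
proof -
  define n where "n k k' = fst k + snd k - fst k' - snd k'" for k k' :: "int \<times> int"
  define m where "m k k' = fst k ^ 2 + snd k ^ 2 - fst k' ^ 2 - snd k' ^ 2" for k k' :: "int \<times> int"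
  define C where "C k k' = EE e k p * cnj (EE e k' q) * hat d e X k k'" for k k'
  have pt: "(let U = tensor (W (fst ab) (snd ab)) (W (fst ab) (snd ab)) in mult2 d (mult2 d U X) (adj2 U)) p q
     = (\<Sum>k\<in>Idx2 d. \<Sum>k'\<in>Idx2 d. omega d (fst ab * of_int (n k k') + snd ab * of_int (m k k')) * C k k')" for ab
    unfolding Let_def
    apply (subst twirl_pointwise[OF W p q])
    apply (unfold n_def)
    apply (unfold m_def)
    apply (unfold C_def)
    apply (unfold cc_prod)
    apply (rule refl)
    done
  have "twirl d W X p q = (\<integral>ab. (\<Sum>k\<in>Idx2 d. \<Sum>k'\<in>Idx2 d. omega d (fst ab * of_int (n k k') + snd ab * of_int (m k k')) * C k k') \<partial>unif2 d)"
    unfolding twirl_def pt ..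
  also have "\<dots> = (\<Sum>k\<in>Idx2 d. \<integral>ab. (\<Sum>k'\<in>Idx2 d. omega d (fst ab * of_int (n k k') + snd ab * of_int (m k k')) * C k k') \<partial>unif2 d)"
    by (rule Bochner_Integration.integral_sum) (auto intro!: integrable_sum integrable_mult_left unif2_integral(1)[OF d])
  also have "\<dots> = (\<Sum>k\<in>Idx2 d. \<Sum>k'\<in>Idx2 d. \<integral>ab. omega d (fst ab * of_int (n k k') + snd ab * of_int (m k k')) * C k k' \<partial>unif2 d)"
    by (rule sum.cong[OF refl], rule Bochner_Integration.integral_sum) (auto intro!: integrable_mult_left unif2_integral(1)[OF d])
  also have "\<dots> = (\<Sum>k\<in>Idx2 d. \<Sum>k'\<in>Idx2 d. (if n k k' = 0 \<and> m k k' = 0 then 1 else 0) * C k k')"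
    by (simp only: integral_mult_left_zero unif2_integral(2)[OF d])
  also have "\<dots> = (\<Sum>k\<in>Idx2 d. \<Sum>k'\<in>Idx2 d. if pm k k' then C k k' else 0)"
    by (intro sum.cong refl) (auto simp: pm_def n_def m_def)
  finally show ?thesis unfolding C_def .
qed


definition sw :: "int \<times> int \<Rightarrow> int \<times> int" where "sw k = (snd k, fst k)"

lemma pm_iff: "pm k k' \<longleftrightarrow> k' = k \<or> k' = sw k"
proof
  assume h: "pm k k'"
  obtain k1 k2 a1 a2 where e: "k = (k1, k2)" "k' = (a1, a2)" by fastforce
  have h1: "k1 + k2 = a1 + a2" and h2: "k1^2 + k2^2 = a1^2 + a2^2" using h e by (auto simp: pm_def)
  have k2: "k2 = a1 + a2 - k1" using h1 by simp
  have "(k1 - a1) * (k1 - a2) = 0"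
  proof -
    have "k1^2 + (a1 + a2 - k1)^2 = a1^2 + a2^2" using h2 k2 by simp
    then have "2 * ((k1 - a1) * (k1 - a2)) = 0" by (simp add: power2_eq_square algebra_simps)
    then show ?thesis by simp
  qed
  then have "k1 = a1 \<or> k1 = a2" by simp
  then show "k' = k \<or> k' = sw k" using k2 e by (auto simp: sw_def)
next
  assume "k' = k \<or> k' = sw k"
  then show "pm k k'" by (auto simp: pm_def sw_def)
qed

lemma sw_Idx2: "k \<in> Idx2 d \<Longrightarrow> sw k \<in> Idx2 d" by (auto simp: sw_def Idx2_def)
lemma sw_sw[simp]: "sw (sw k) = k" by (simp add: sw_def)
lemma sw_eq: "sw k = k \<longleftrightarrow> fst k = snd k" by (auto simp: sw_def prod_eq_iff)

lemma pm_sum: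
  assumes "k \<in> Idx2 d"
  shows "(\<Sum>k'\<in>Idx2 d. if pm k k' then f k' else 0) = f k + (if fst k \<noteq> snd k then f (sw k) else (0::'a::comm_monoid_add))"
proof -
  have "(\<Sum>k'\<in>Idx2 d. if pm k k' then f k' else 0) = (\<Sum>k'\<in>Idx2 d. if k' \<in> {k, sw k} then f k' else 0)"
    by (simp add: pm_iff)
  also have "\<dots> = (\<Sum>k'\<in>Idx2 d \<inter> {k, sw k}. f k')"
    by (simp add: sum.inter_restrict)
  also have "Idx2 d \<inter> {k, sw k} = {k, sw k}" using assms sw_Idx2 by auto
  also have "(\<Sum>k'\<in>{k, sw k}. f k') = f k + (if fst k \<noteq> snd k then f (sw k) else 0)"
  proof (cases "fst k = snd k")
    case True then show ?thesis using sw_eq[of k] by simp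
  next
    case False
    then have "sw k \<noteq> k" using sw_eq[of k] by simp
    then show ?thesis using False by (simp add: sum.insert_if)
  qed
  finally show ?thesis .
qed

lemma twirl_formula2:
  assumes W: "Wrep d W e"
    and p: "p \<in> Idx2 d" and q: "q \<in> Idx2 d" and d: "d > 0"
  shows "twirl d W X p q =
    (\<Sum>k\<in>Idx2 d. EE e k p * cnj (EE e k q) * hat d e X k k +
       (if fst k \<noteq> snd k then EE e k p * cnj (EE e (sw k) q) * hat d e X k (sw k) else 0))"
  unfolding twirl_formula[OF W p q d]
  by (rule sum.cong[OF refl]) (rule pm_sum)

definition delta :: "int \<Rightarrow> int \<Rightarrow> complex" where "delta k j = (if k = j then 1 else 0)"

lemma mult_delta[simp]: "(if P then 1 else 0) * y = (if P then y else (0::complex))"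
  "y * (if P then 1 else 0) = (if P then y else (0::complex))" by auto

lemma Vop_repr: "Wrep d (Vop d) delta"
  unfolding Wrep_def
proof (intro allI impI)
  fix a b j j' assume j: "j \<in> Idx d" "j' \<in> Idx d"
  have "(\<Sum>k\<in>Idx d. omega d (a * of_int k + b * of_int k ^ 2) * delta k j * cnj (delta k j')) =
        (\<Sum>k\<in>Idx d. if k = j then (if j = j' then omega d (a * of_int j + b * of_int j ^ 2) else 0) else 0)"
    by (rule sum.cong[OF refl]) (auto simp: delta_def)
  also have "\<dots> = Vop d a b j j'" using j by (simp add: Vop_def sum.delta)
  finally show "Vop d a b j j' = (\<Sum>k\<in>Idx d. omega d (a * of_int k + b * of_int k ^ 2) * delta k j * cnj (delta k j'))" ..
qed

lemma EE_delta: "EE delta k p = (if k = p then 1 else 0)"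
  by (auto simp: EE_def delta_def prod_eq_iff)

lemma hat_delta: "k \<in> Idx2 d \<Longrightarrow> k' \<in> Idx2 d \<Longrightarrow> hat d delta X k k' = X k k'"
  by (simp add: hat_def EE_delta if_distrib[of cnj] cong: if_cong)

lemma Gmap_formula:
  assumes p: "p \<in> Idx2 d" and q: "q \<in> Idx2 d" and d: "d > 0"
  shows "Gmap d X p q = (if pm p q then X p q else 0)"
proof -
  have "Gmap d X p q = (\<Sum>k\<in>Idx2 d. \<Sum>k'\<in>Idx2 d. if k' = q then (if k = p then (if pm p q then X p q else 0) else 0) else 0)"
    unfolding Gmap_def twirl_formula[OF Vop_repr p q d]
    by (intro sum.cong refl) (auto simp: EE_delta hat_delta)
  also have "\<dots> = (if pm p q then X p q else 0)" using p q by (simp add: sum.delta)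
  finally show ?thesis .
qed


definition Om :: "nat \<Rightarrow> int \<times> int \<Rightarrow> int \<times> int \<Rightarrow> complex" where
  "Om d k v = omega d (of_int (fst k * fst v + snd k * snd v))"

lemma omega_int_mult: "omega d (of_int x) * omega d (of_int y) = omega d (of_int (x + y))"
  by (simp add: omega_add)

lemma omega_int_cnj: "cnj (omega d (of_int x)) = omega d (of_int (- x))"
  by (simp add: omega_cnj)

lemma sum_Idx2: "(\<Sum>k\<in>Idx2 d. g k) = (\<Sum>k1\<in>Idx d. \<Sum>k2\<in>Idx d. g (k1, k2))"
  by (simp add: Idx2_def sum.cartesian_product)

lemma Vtop_repr: "Wrep d (Vtop d) (fvec d)"
  unfolding Wrep_def Vtop_def by simp

lemma EE_fvec: "d > 0 \<Longrightarrow> EE (fvec d) k p = Om d k p / of_nat d"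
proof -
  assume d: "d > 0"
  define s where "s = complex_of_real (sqrt (real d))"
  have s: "s * s = of_nat d"
    unfolding s_def of_real_mult[symmetric] real_sqrt_mult_self by simp
  have "EE (fvec d) k p = omega d (of_int (fst k * fst p)) * omega d (of_int (snd k * snd p)) / (s * s)"
    unfolding EE_def fvec_def s_def by (simp only: times_divide_times_eq)
  also have "\<dots> = Om d k p / of_nat d"
    unfolding s Om_def omega_int_mult ..
  finally show ?thesis .
qed

context fixes d :: nat assumes d2: "d \<ge> 2" and ev: "even d"
begin

lemma CS: "(\<Sum>k\<in>Idx2 d. omega d (of_int (fst k * v1 + snd k * v2))) =
   (if int d dvd v1 \<and> int d dvd v2 then of_nat d ^ 2 else 0)"
proof -
  have "(\<Sum>k\<in>Idx2 d. omega d (of_int (fst k * v1 + snd k * v2))) =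
        (\<Sum>k1\<in>Idx d. \<Sum>k2\<in>Idx d. omega d (of_int (k1 * v1)) * omega d (of_int (k2 * v2)))"
    unfolding sum_Idx2 by (simp add: omega_add algebra_simps)
  also have "\<dots> = (\<Sum>k1\<in>Idx d. omega d (of_int (k1 * v1))) * (\<Sum>k2\<in>Idx d. omega d (of_int (k2 * v2)))"
    by (simp add: sum_product)
  also have "\<dots> = (if int d dvd v1 \<and> int d dvd v2 then of_nat d ^ 2 else 0)"
    by (simp only: char_sum[OF d2 ev]) (simp add: power2_eq_square)
  finally show ?thesis .
qed

lemma diag_sum: "(\<Sum>k\<in>Idx2 d. if fst k = snd k then f k else 0) = (\<Sum>i\<in>Idx d. f (i, i))"
  unfolding sum_Idx2 by (simp add: sum.delta)

lemma CR: "(\<Sum>k\<in>Idx2 d. if fst k \<noteq> snd k then omega d (of_int (fst k * v1 + snd k * v2)) else 0) =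
   (if int d dvd v1 \<and> int d dvd v2 then of_nat d ^ 2 else 0) - (if int d dvd (v1 + v2) then of_nat d else 0)"
proof -
  define f where "f k = omega d (of_int (fst k * v1 + snd k * v2))" for k :: "int \<times> int"
  have split: "(\<Sum>k\<in>Idx2 d. f k) = (\<Sum>k\<in>Idx2 d. if fst k \<noteq> snd k then f k else 0) + (\<Sum>k\<in>Idx2 d. if fst k = snd k then f k else 0)"
    by (subst sum.distrib[symmetric]) (rule sum.cong, auto)
  have diag: "(\<Sum>k\<in>Idx2 d. if fst k = snd k then f k else 0) = (\<Sum>i\<in>Idx d. omega d (of_int (i * (v1 + v2))))"
    unfolding diag_sum f_def by (simp add: algebra_simps)
  have "(\<Sum>k\<in>Idx2 d. if fst k \<noteq> snd k then f k else 0) = (\<Sum>k\<in>Idx2 d. f k) - (\<Sum>i\<in>Idx d. omega d (of_int (i * (v1 + v2))))"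
    using split diag by simp
  also have "\<dots> = (if int d dvd v1 \<and> int d dvd v2 then of_nat d ^ 2 else 0) - (if int d dvd (v1 + v2) then of_nat d else 0)"
    unfolding f_def by (simp only: CS char_sum[OF d2 ev])
  finally show ?thesis unfolding f_def by simp
qed

end


definition LL :: "int \<times> int \<Rightarrow> int \<times> int \<Rightarrow> int" where
  "LL k v = fst k * fst v + snd k * snd v"

lemma Om_LL: "Om d k v = omega d (of_int (LL k v))" by (simp add: Om_def LL_def)

lemma EE4:
  assumes "d > 0"
  shows "EE (fvec d) k p * cnj (EE (fvec d) k' q) * (cnj (EE (fvec d) k r) * x * EE (fvec d) k' s) =
    omega d (of_int (LL k p - LL k' q - LL k r + LL k' s)) * x / of_nat d ^ 4"
proof -
  have "EE (fvec d) k p * cnj (EE (fvec d) k' q) * (cnj (EE (fvec d) k r) * x * EE (fvec d) k' s) =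
     (Om d k p * cnj (Om d k' q) * cnj (Om d k r) * Om d k' s) * x / (of_nat d ^ 4)"
    unfolding EE_fvec[OF assms] by (simp add: power_def field_simps)
  also have "Om d k p * cnj (Om d k' q) * cnj (Om d k r) * Om d k' s = omega d (of_int (LL k p - LL k' q - LL k r + LL k' s))"
    unfolding Om_LL omega_int_cnj omega_int_mult by (simp add: algebra_simps)
  finally show ?thesis .
qed

definition isG :: "nat \<Rightarrow> op2 \<Rightarrow> op2 \<Rightarrow> bool" where
  "isG d Z X \<longleftrightarrow> (\<forall>r\<in>Idx2 d. \<forall>s\<in>Idx2 d. Z r s = (if pm r s then X r s else 0))"

lemma hat_Z:
  assumes Z: "isG d Z X"
  shows "hat d e Z k k' = (\<Sum>r\<in>Idx2 d. cnj (EE e k r) * X r r * EE e k' r +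
      (if fst r \<noteq> snd r then cnj (EE e k r) * X r (sw r) * EE e k' (sw r) else 0))"
  unfolding hat_def
proof (rule sum.cong[OF refl])
  fix r assume r: "r \<in> Idx2 d"
  have "(\<Sum>s\<in>Idx2 d. cnj (EE e k r) * Z r s * EE e k' s) = (\<Sum>s\<in>Idx2 d. if pm r s then cnj (EE e k r) * X r s * EE e k' s else 0)"
    using r Z by (intro sum.cong refl) (simp add: isG_def)
  also have "\<dots> = cnj (EE e k r) * X r r * EE e k' r +
      (if fst r \<noteq> snd r then cnj (EE e k r) * X r (sw r) * EE e k' (sw r) else 0)"
    by (rule pm_sum[OF r])
  finally show "(\<Sum>s\<in>Idx2 d. cnj (EE e k r) * Z r s * EE e k' s) = cnj (EE e k r) * X r r * EE e k' r +
      (if fst r \<noteq> snd r then cnj (EE e k r) * X r (sw r) * EE e k' (sw r) else 0)" .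
qed


lemma sum_if_out: "(if c then sum f S else 0) = (\<Sum>r\<in>S. if c then f r else (0::complex))" by simp

lemma mult_if0: "a * (if c then x else 0) = (if c then a * x else (0::complex))" by simp

definition CSv :: "nat \<Rightarrow> int \<Rightarrow> int \<Rightarrow> complex" where
  "CSv d v1 v2 = (if int d dvd v1 \<and> int d dvd v2 then of_nat d ^ 2 else 0)"
definition CRv :: "nat \<Rightarrow> int \<Rightarrow> int \<Rightarrow> complex" where
  "CRv d v1 v2 = CSv d v1 v2 - (if int d dvd (v1 + v2) then of_nat d else 0)"

context fixes d :: nat assumes d2: "d \<ge> 2" and ev: "even d"
begin

lemma Gt_Z:
  assumes Z: "isG d Z X"
    and p: "p \<in> Idx2 d" and q: "q \<in> Idx2 d"
  shows "Gtmap d Z p q = (\<Sum>r\<in>Idx2 d.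
     (X r r * (CSv d (fst p - fst q) (snd p - snd q) + CRv d (fst p - snd q - fst r + snd r) (snd p - fst q - snd r + fst r))
      + (if fst r \<noteq> snd r then X r (sw r) else 0) *
        (CSv d (fst p - fst q - fst r + snd r) (snd p - snd q - snd r + fst r) + CRv d (fst p - snd q) (snd p - fst q))) / of_nat d ^ 4)"
proof -
  have dpos: "d > 0" using d2 by simp
  let ?E = "EE (fvec d)"
  define va1 where "va1 = fst p - fst q"
  define va2 where "va2 = snd p - snd q"
  define vb1 where "vb1 r = fst p - fst q - fst r + snd r" for r :: "int \<times> int"
  define vb2 where "vb2 r = snd p - snd q - snd r + fst r" for r :: "int \<times> int"
  define vc1 where "vc1 r = fst p - snd q - fst r + snd r" for r :: "int \<times> int"
  define vc2 where "vc2 r = snd p - fst q - snd r + fst r" for r :: "int \<times> int"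
  define vd1 where "vd1 = fst p - snd q"
  define vd2 where "vd2 = snd p - fst q"
  define Y where "Y r = (if fst r \<noteq> snd r then X r (sw r) else 0)" for r
  define G where "G k r = (X r r * omega d (of_int (fst k * va1 + snd k * va2))
      + Y r * omega d (of_int (fst k * vb1 r + snd k * vb2 r))
      + X r r * (if fst k \<noteq> snd k then omega d (of_int (fst k * vc1 r + snd k * vc2 r)) else 0)
      + Y r * (if fst k \<noteq> snd k then omega d (of_int (fst k * vd1 + snd k * vd2)) else 0)) / of_nat d ^ 4" for k r
  have e1: "LL k p - LL k q - LL k r + LL k r = fst k * va1 + snd k * va2" for k r
    by (simp add: LL_def va1_def va2_def algebra_simps)
  have e2: "LL k p - LL k q - LL k r + LL k (sw r) = fst k * vb1 r + snd k * vb2 r" for k r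
    by (simp add: LL_def vb1_def vb2_def sw_def algebra_simps)
  have e3: "LL k p - LL (sw k) q - LL k r + LL (sw k) r = fst k * vc1 r + snd k * vc2 r" for k r
    by (simp add: LL_def vc1_def vc2_def sw_def algebra_simps)
  have e4: "LL k p - LL (sw k) q - LL k r + LL (sw k) (sw r) = fst k * vd1 + snd k * vd2" for k r
    by (simp add: LL_def vd1_def vd2_def sw_def algebra_simps)
  have "Gtmap d Z p q = (\<Sum>k\<in>Idx2 d. ?E k p * cnj (?E k q) * hat d (fvec d) Z k k +
       (if fst k \<noteq> snd k then ?E k p * cnj (?E (sw k) q) * hat d (fvec d) Z k (sw k) else 0))"
    unfolding Gmap_def Gtmap_def by (rule twirl_formula2[OF Vtop_repr p q dpos])
  also have "\<dots> = (\<Sum>k\<in>Idx2 d. \<Sum>r\<in>Idx2 d. G k r)"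
  proof (rule sum.cong[OF refl])
    fix k assume k: "k \<in> Idx2 d"
    have "?E k p * cnj (?E k q) * hat d (fvec d) Z k k +
       (if fst k \<noteq> snd k then ?E k p * cnj (?E (sw k) q) * hat d (fvec d) Z k (sw k) else 0)
      = (\<Sum>r\<in>Idx2 d. ?E k p * cnj (?E k q) * (cnj (?E k r) * X r r * ?E k r +
          (if fst r \<noteq> snd r then cnj (?E k r) * X r (sw r) * ?E k (sw r) else 0)) +
         (if fst k \<noteq> snd k then ?E k p * cnj (?E (sw k) q) * (cnj (?E k r) * X r r * ?E (sw k) r +
          (if fst r \<noteq> snd r then cnj (?E k r) * X r (sw r) * ?E (sw k) (sw r) else 0)) else 0))"
      by (simp only: hat_Z[OF Z] sum_distrib_left sum_if_out sum.distrib[symmetric])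
    also have "\<dots> = (\<Sum>r\<in>Idx2 d. G k r)"
    proof (rule sum.cong[OF refl])
      fix r
      show "?E k p * cnj (?E k q) * (cnj (?E k r) * X r r * ?E k r +
          (if fst r \<noteq> snd r then cnj (?E k r) * X r (sw r) * ?E k (sw r) else 0)) +
         (if fst k \<noteq> snd k then ?E k p * cnj (?E (sw k) q) * (cnj (?E k r) * X r r * ?E (sw k) r +
          (if fst r \<noteq> snd r then cnj (?E k r) * X r (sw r) * ?E (sw k) (sw r) else 0)) else 0) = G k r"
        unfolding distrib_left mult_if0 EE4[OF dpos] e1 e2 e3 e4 G_def Y_def
        by (cases "fst r = snd r"; cases "fst k = snd k") (simp_all add: add_divide_distrib algebra_simps)
    qed
    finally show "?E k p * cnj (?E k q) * hat d (fvec d) Z k k +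
       (if fst k \<noteq> snd k then ?E k p * cnj (?E (sw k) q) * hat d (fvec d) Z k (sw k) else 0) = (\<Sum>r\<in>Idx2 d. G k r)" .
  qed
  also have "\<dots> = (\<Sum>r\<in>Idx2 d. \<Sum>k\<in>Idx2 d. G k r)" by (rule sum.swap)
  also have "\<dots> = (\<Sum>r\<in>Idx2 d.
     (X r r * (CSv d va1 va2 + CRv d (vc1 r) (vc2 r)) + Y r * (CSv d (vb1 r) (vb2 r) + CRv d vd1 vd2)) / of_nat d ^ 4)"
  proof (rule sum.cong[OF refl])
    fix r
    show "(\<Sum>k\<in>Idx2 d. G k r) = (X r r * (CSv d va1 va2 + CRv d (vc1 r) (vc2 r)) + Y r * (CSv d (vb1 r) (vb2 r) + CRv d vd1 vd2)) / of_nat d ^ 4"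
      unfolding G_def sum_divide_distrib[symmetric] sum.distrib sum_distrib_left[symmetric]
        CS[OF d2 ev] CR[OF d2 ev] CSv_def CRv_def
      by (simp add: algebra_simps)
  qed
  finally show ?thesis
    unfolding va1_def va2_def vb1_def vb2_def vc1_def vc2_def vd1_def vd2_def Y_def .
qed

end


definition Tr :: "nat \<Rightarrow> op2 \<Rightarrow> complex" where "Tr d X = (\<Sum>r\<in>Idx2 d. X r r)"
definition TF :: "nat \<Rightarrow> op2 \<Rightarrow> complex" where "TF d X = (\<Sum>r\<in>Idx2 d. X r (sw r))"
definition Dg :: "nat \<Rightarrow> op2 \<Rightarrow> complex" where "Dg d X = (\<Sum>i\<in>Idx d. X (i, i) (i, i))"
definition Sd :: "nat \<Rightarrow> op2 \<Rightarrow> int \<Rightarrow> complex" where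
  "Sd d X u = (\<Sum>i\<in>Idx d. X (i, wrap d (i + u)) (i, wrap d (i + u)))"
definition Ld :: "nat \<Rightarrow> op2 \<Rightarrow> int \<Rightarrow> complex" where
  "Ld d X u = (\<Sum>i\<in>Idx d. X (i, wrap d (i + u)) (wrap d (i + u), i))"

definition Form :: "nat \<Rightarrow> (int \<Rightarrow> complex) \<Rightarrow> (int \<Rightarrow> complex) \<Rightarrow> complex \<Rightarrow> op2" where
  "Form d xi la eta p q =
     (if q = p \<and> fst p \<noteq> snd p then xi (wrap d (snd p - fst p)) else 0) +
     (if q = sw p \<and> fst p \<noteq> snd p then la (wrap d (snd p - fst p)) else 0) +
     (if q = p \<and> fst p = snd p then eta else 0)"

context fixes d :: nat assumes d2: "d \<ge> 2" and ev: "even d"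
begin

lemma dvd_Idx: "a \<in> Idx d \<Longrightarrow> b \<in> Idx d \<Longrightarrow> int d dvd (a - b) \<longleftrightarrow> a = b"
proof -
  assume a: "a \<in> Idx d" and b: "b \<in> Idx d"
  have "int d dvd (a - b) \<longleftrightarrow> a mod int d = b mod int d" by (simp add: mod_eq_dvd_iff)
  also have "\<dots> \<longleftrightarrow> wrap d a = wrap d b" by (simp add: wrap_eq_iff[OF d2 ev])
  also have "\<dots> \<longleftrightarrow> a = b" using a b by (simp add: wrap_id[OF d2 ev])
  finally show ?thesis .
qed

lemma wrap_dvd: "b \<in> Idx d \<Longrightarrow> int d dvd (b - c) \<longleftrightarrow> b = wrap d c"
proof -
  assume b: "b \<in> Idx d"
  have "int d dvd (b - c) \<longleftrightarrow> b mod int d = c mod int d" by (simp add: mod_eq_dvd_iff)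
  also have "\<dots> \<longleftrightarrow> wrap d b = wrap d c" by (simp add: wrap_eq_iff[OF d2 ev])
  also have "\<dots> \<longleftrightarrow> b = wrap d c" using b by (simp add: wrap_id[OF d2 ev])
  finally show ?thesis .
qed

lemma reindex_dvd: "(\<Sum>r\<in>Idx2 d. if int d dvd (snd r - fst r - c) then f r else 0) = (\<Sum>i\<in>Idx d. f (i, wrap d (i + c)))"
proof -
  have "(\<Sum>r\<in>Idx2 d. if int d dvd (snd r - fst r - c) then f r else 0) =
        (\<Sum>i\<in>Idx d. \<Sum>j\<in>Idx d. if j = wrap d (i + c) then f (i, j) else 0)"
    unfolding sum_Idx2 by (intro sum.cong refl) (simp add: wrap_dvd[symmetric] algebra_simps)
  also have "\<dots> = (\<Sum>i\<in>Idx d. f (i, wrap d (i + c)))"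
    by (simp add: sum.delta wrap_in[OF d2 ev])
  finally show ?thesis .
qed

lemma wrap_wrap_add: "wrap d (i + wrap d c) = wrap d (i + c)"
proof -
  have "(i + wrap d c) mod int d = (i + c) mod int d" by (metis mod_add_right_eq wrap_mod[OF d2 ev])
  then show ?thesis by (simp add: wrap_eq_iff[OF d2 ev])
qed

lemma sumY: "(\<Sum>r\<in>Idx2 d. if fst r \<noteq> snd r then X r (sw r) else 0) = TF d X - Dg d X"
proof -
  have "TF d X = (\<Sum>r\<in>Idx2 d. if fst r \<noteq> snd r then X r (sw r) else 0) + (\<Sum>r\<in>Idx2 d. if fst r = snd r then X r (sw r) else 0)"
    unfolding TF_def by (subst sum.distrib[symmetric]) (rule sum.cong, auto)
  moreover have "(\<Sum>r\<in>Idx2 d. if fst r = snd r then X r (sw r) else 0) = Dg d X"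
    unfolding diag_sum[OF d2 ev] Dg_def by (simp add: sw_def)
  ultimately show ?thesis by simp
qed

lemma CSv_neg: "y = - x \<Longrightarrow> CSv d x y = (if int d dvd x then of_nat d ^ 2 else 0)"
  by (simp add: CSv_def)

lemma CRv_neg: "y = - x \<Longrightarrow> CRv d x y = (if int d dvd x then of_nat d ^ 2 else 0) - of_nat d"
  by (simp add: CRv_def CSv_def)

lemma Rmap_pm:
  assumes p: "p \<in> Idx2 d" and q: "q \<in> Idx2 d"
  shows "Rmap d X p q = (if pm p q then Gtmap d (Gmap d X) p q else 0)"
proof -
  have "Gtmap d (Gmap d X) p q = Gtmap d (Gmap d X) p q" ..
  then show ?thesis
    unfolding Rmap_def comp_def using Gmap_formula[OF p q] d2 by simp
qed

lemma isG_Gmap: "isG d (Gmap d X) X"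
  unfolding isG_def using Gmap_formula d2 by simp

lemma Gt_diag:
  assumes p: "p \<in> Idx2 d"
  shows "Gtmap d (Gmap d X) p p =
    ((of_nat d ^ 2 - of_nat d) * Tr d X + of_nat d ^ 2 * Sd d X (snd p - fst p)
     + ((if fst p = snd p then of_nat d ^ 2 else 0) - of_nat d) * (TF d X - Dg d X)) / of_nat d ^ 4"
proof -
  define a where "a = fst p"
  define b where "b = snd p"
  have "Gtmap d (Gmap d X) p p = (\<Sum>r\<in>Idx2 d.
     ((of_nat d ^ 2 - of_nat d) * X r r + of_nat d ^ 2 * (if int d dvd (snd r - fst r - (b - a)) then X r r else 0)
      + ((if a = b then of_nat d ^ 2 else 0) - of_nat d) * (if fst r \<noteq> snd r then X r (sw r) else 0)) / of_nat d ^ 4)"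
    unfolding Gt_Z[OF d2 ev isG_Gmap p p]
  proof (rule sum.cong[OF refl])
    fix r assume r: "r \<in> Idx2 d"
    have c1: "CSv d (fst p - fst p) (snd p - snd p) = of_nat d ^ 2" by (simp add: CSv_def)
    have c2: "CRv d (fst p - snd p - fst r + snd r) (snd p - fst p - snd r + fst r) =
        (if int d dvd (snd r - fst r - (b - a)) then of_nat d ^ 2 else 0) - of_nat d"
      by (subst CRv_neg) (simp_all add: a_def b_def algebra_simps)
    have c3: "fst r \<noteq> snd r \<Longrightarrow> CSv d (fst p - fst p - fst r + snd r) (snd p - snd p - snd r + fst r) = 0"
      using r dvd_Idx[of "snd r" "fst r"] by (simp add: CSv_def Idx2_def mem_Times_iff)
    have c4: "CRv d (fst p - snd p) (snd p - fst p) = (if a = b then of_nat d ^ 2 else 0) - of_nat d"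
      using p dvd_Idx[of a b] by (subst CRv_neg) (auto simp: a_def b_def Idx2_def mem_Times_iff)
    show "(X r r * (CSv d (fst p - fst p) (snd p - snd p) + CRv d (fst p - snd p - fst r + snd r) (snd p - fst p - snd r + fst r))
      + (if fst r \<noteq> snd r then X r (sw r) else 0) *
        (CSv d (fst p - fst p - fst r + snd r) (snd p - snd p - snd r + fst r) + CRv d (fst p - snd p) (snd p - fst p))) / of_nat d ^ 4 =
      ((of_nat d ^ 2 - of_nat d) * X r r + of_nat d ^ 2 * (if int d dvd (snd r - fst r - (b - a)) then X r r else 0)
      + ((if a = b then of_nat d ^ 2 else 0) - of_nat d) * (if fst r \<noteq> snd r then X r (sw r) else 0)) / of_nat d ^ 4"
      unfolding c1 c2 c4 using c3 by (cases "fst r = snd r") (auto simp: algebra_simps)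
  qed
  also have "\<dots> = ((of_nat d ^ 2 - of_nat d) * Tr d X + of_nat d ^ 2 * Sd d X (b - a)
     + ((if a = b then of_nat d ^ 2 else 0) - of_nat d) * (TF d X - Dg d X)) / of_nat d ^ 4"
    unfolding sum_divide_distrib[symmetric] sum.distrib sum_distrib_left[symmetric] reindex_dvd sumY
    by (simp add: Tr_def Sd_def)
  finally show ?thesis by (simp add: a_def b_def)
qed

lemma Gt_off:
  assumes p: "p \<in> Idx2 d" and ne: "fst p \<noteq> snd p"
  shows "Gtmap d (Gmap d X) p (sw p) =
    (- of_nat d * Tr d X + of_nat d ^ 2 * Dg d X + of_nat d ^ 2 * Ld d X (snd p - fst p)
     + (of_nat d ^ 2 - of_nat d) * (TF d X - Dg d X)) / of_nat d ^ 4"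
proof -
  define a where "a = fst p"
  define b where "b = snd p"
  have ab: "a \<in> Idx d" "b \<in> Idx d" "a \<noteq> b" using p ne by (auto simp: a_def b_def Idx2_def mem_Times_iff)
  have sp: "sw p \<in> Idx2 d" using p by (rule sw_Idx2)
  have "Gtmap d (Gmap d X) p (sw p) = (\<Sum>r\<in>Idx2 d.
     (- of_nat d * X r r + of_nat d ^ 2 * (if fst r = snd r then X r r else 0)
      + of_nat d ^ 2 * (if int d dvd (snd r - fst r - (b - a)) then X r (sw r) else 0)
      + (of_nat d ^ 2 - of_nat d) * (if fst r \<noteq> snd r then X r (sw r) else 0)) / of_nat d ^ 4)"
    unfolding Gt_Z[OF d2 ev isG_Gmap p sp]
  proof (rule sum.cong[OF refl])
    fix r assume r: "r \<in> Idx2 d"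
    have r12: "fst r \<in> Idx d" "snd r \<in> Idx d" using r by (auto simp: Idx2_def mem_Times_iff)
    have c1: "CSv d (fst p - fst (sw p)) (snd p - snd (sw p)) = 0"
      using dvd_Idx[OF ab(1) ab(2)] ab(3) by (simp add: CSv_def sw_def a_def b_def)
    have c2: "CRv d (fst p - snd (sw p) - fst r + snd r) (snd p - fst (sw p) - snd r + fst r) =
        (if fst r = snd r then of_nat d ^ 2 else 0) - of_nat d"
      using dvd_Idx[OF r12(2) r12(1)] by (subst CRv_neg) (auto simp: sw_def algebra_simps)
    have c3: "CSv d (fst p - fst (sw p) - fst r + snd r) (snd p - snd (sw p) - snd r + fst r) =
        (if int d dvd (snd r - fst r - (b - a)) then of_nat d ^ 2 else 0)"
      by (subst CSv_neg) (simp_all add: sw_def a_def b_def algebra_simps)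
    have c4: "CRv d (fst p - snd (sw p)) (snd p - fst (sw p)) = of_nat d ^ 2 - of_nat d"
      by (simp add: CRv_def CSv_def sw_def)
    have c5: "fst r = snd r \<Longrightarrow> \<not> int d dvd (snd r - fst r - (b - a))"
    proof
      assume e: "fst r = snd r" and dv: "int d dvd (snd r - fst r - (b - a))"
      have "snd r - fst r - (b - a) = a - b" using e by simp
      then show False using dv dvd_Idx[OF ab(1) ab(2)] ab(3) by simp
    qed
    show "(X r r * (CSv d (fst p - fst (sw p)) (snd p - snd (sw p)) + CRv d (fst p - snd (sw p) - fst r + snd r) (snd p - fst (sw p) - snd r + fst r))
      + (if fst r \<noteq> snd r then X r (sw r) else 0) *
        (CSv d (fst p - fst (sw p) - fst r + snd r) (snd p - snd (sw p) - snd r + fst r) + CRv d (fst p - snd (sw p)) (snd p - fst (sw p)))) / of_nat d ^ 4 =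
      (- of_nat d * X r r + of_nat d ^ 2 * (if fst r = snd r then X r r else 0)
      + of_nat d ^ 2 * (if int d dvd (snd r - fst r - (b - a)) then X r (sw r) else 0)
      + (of_nat d ^ 2 - of_nat d) * (if fst r \<noteq> snd r then X r (sw r) else 0)) / of_nat d ^ 4"
      unfolding c1 c2 c3 c4 using c5 by (cases "fst r = snd r") (auto simp: algebra_simps)
  qed
  also have "\<dots> = (- of_nat d * Tr d X + of_nat d ^ 2 * Dg d X + of_nat d ^ 2 * Ld d X (b - a)
     + (of_nat d ^ 2 - of_nat d) * (TF d X - Dg d X)) / of_nat d ^ 4"
    unfolding sum_divide_distrib[symmetric] sum.distrib sum_distrib_left[symmetric] reindex_dvd sumY
      diag_sum[OF d2 ev]
    by (simp add: Tr_def Ld_def Dg_def sw_def)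
  finally show ?thesis by (simp add: a_def b_def)
qed

lemma Sd_wrap: "Sd d X (wrap d c) = Sd d X c"
  unfolding Sd_def wrap_wrap_add ..

lemma Ld_wrap: "Ld d X (wrap d c) = Ld d X c"
  unfolding Ld_def wrap_wrap_add ..

lemma Sd_0: "Sd d X 0 = Dg d X"
  unfolding Sd_def Dg_def by (intro sum.cong refl) (simp add: wrap_id[OF d2 ev])

lemma one_step:
  assumes T0: "Tr d X = 0" and F0: "TF d X = 0" and p: "p \<in> Idx2 d" and q: "q \<in> Idx2 d"
  shows "Rmap d X p q = Form d (\<lambda>u. Sd d X u / of_nat d ^ 2 + Dg d X / of_nat d ^ 3)
                               (\<lambda>u. Ld d X u / of_nat d ^ 2 + Dg d X / of_nat d ^ 3)
                               (Dg d X / of_nat d ^ 3) p q"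
proof -
  have d0: "(of_nat d :: complex) \<noteq> 0" using d2 by simp
  consider (diag) "q = p" | (off) "q = sw p" "q \<noteq> p" | (none) "\<not> pm p q"
    using pm_iff by blast
  then show ?thesis
  proof cases
    case diag
    have R: "Rmap d X p q = Gtmap d (Gmap d X) p p" using Rmap_pm[OF p q] diag by (simp add: pm_def)
    show ?thesis
    proof (cases "fst p = snd p")
      case True
      then show ?thesis unfolding R Gt_diag[OF p] using T0 F0 d0 diag
        by (simp add: Form_def Sd_0 power2_eq_square field_simps power_Suc[symmetric] del: power_Suc)
    next
      case False
      then have "p \<noteq> sw p" using sw_eq by metis
      then show ?thesis unfolding R Gt_diag[OF p] using T0 F0 d0 diag False
        by (simp add: Form_def Sd_wrap power2_eq_square field_simps; simp add: eval_nat_numeral algebra_simps)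
    qed
  next
    case off
    then have ne: "fst p \<noteq> snd p" using sw_eq by auto
    have R: "Rmap d X p q = Gtmap d (Gmap d X) p (sw p)" using Rmap_pm[OF p q] off by (simp add: pm_iff)
    show ?thesis unfolding R Gt_off[OF p ne] using T0 F0 d0 ne off
      by (simp add: pm_iff Form_def Ld_wrap power2_eq_square field_simps; simp add: eval_nat_numeral algebra_simps)
  next
    case none
    then have "q \<noteq> p" "q \<noteq> sw p" using pm_iff by auto
    then show ?thesis unfolding Rmap_pm[OF p q] using none by (simp add: Form_def)
  qed
qed

end


lemma sum_apply2: "(\<Sum>u\<in>A. (F u :: op2)) p q = (\<Sum>u\<in>A. F u p q)"
proof (induct A rule: infinite_finite_induct)
  case (infinite A) then show ?case by simp
next
  case empty then show ?case by simp
next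
  case (insert x F) then show ?case by simp
qed

lemma plus_apply2: "((A :: op2) + B) p q = A p q + B p q" by simp

lemma smul2_apply: "smul2 c A p q = c * A p q" by (simp add: smul2_def)

lemma ketbra_sum_apply: "(\<Sum>a\<in>S. ketbra2 (f a) (g a)) p q = (\<Sum>a\<in>S. if p = f a \<and> q = g a then 1 else 0)"
  unfolding sum_apply2 ketbra2_def ..

context fixes d :: nat assumes d2: "d \<ge> 2" and ev: "even d"
begin

lemma wrap_sol: "u \<in> Idx d \<Longrightarrow> a \<in> Idx d \<Longrightarrow> b \<in> Idx d \<Longrightarrow> b = wrap d (a + u) \<longleftrightarrow> u = wrap d (b - a)"
  using wrap_dvd[OF d2 ev, of b "a + u"] wrap_dvd[OF d2 ev, of u "b - a"]
  by (simp add: algebra_simps) (metis dvd_minus_iff minus_diff_eq diff_diff_eq2 add.commute diff_add_eq)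

lemma wrap_diff_0: "a \<in> Idx d \<Longrightarrow> b \<in> Idx d \<Longrightarrow> wrap d (b - a) = 0 \<longleftrightarrow> a = b"
  using wrap_dvd[OF d2 ev, of 0 "b - a"] dvd_Idx[OF d2 ev, of b a]
  by (auto simp: Idx_def dvd_diff_commute)

lemma wrap_ne0: "p \<in> Idx2 d \<Longrightarrow> wrap d (snd p - fst p) \<in> Idx d - {0} \<longleftrightarrow> fst p \<noteq> snd p"
  using wrap_diff_0[of "fst p" "snd p"] wrap_in[OF d2 ev] by (auto simp: Idx2_def mem_Times_iff)

lemma coef_sum:
  fixes c :: "int \<Rightarrow> complex"
  assumes p: "p \<in> Idx2 d"
  shows "(\<Sum>u\<in>Idx d - {0}. c u * (if P \<and> snd p = wrap d (fst p + u) then 1 else 0)) =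
    (if P \<and> fst p \<noteq> snd p then c (wrap d (snd p - fst p)) else 0)"
proof -
  have p12: "fst p \<in> Idx d" "snd p \<in> Idx d" using p by (auto simp: Idx2_def mem_Times_iff)
  have "(\<Sum>u\<in>Idx d - {0}. c u * (if P \<and> snd p = wrap d (fst p + u) then 1 else 0)) =
        (\<Sum>u\<in>Idx d - {0}. if u = wrap d (snd p - fst p) then (if P then c u else 0) else 0)"
    using p12 by (intro sum.cong refl) (auto simp: wrap_sol)
  also have "\<dots> = (if P \<and> fst p \<noteq> snd p then c (wrap d (snd p - fst p)) else 0)"
    using wrap_ne0[OF p] by (simp add: sum.delta')
  finally show ?thesis .
qed

lemma rhs_eval:
  assumes p: "p \<in> Idx2 d" and q: "q \<in> Idx2 d"
  shows "((\<Sum>u\<in>Idx d - {0}. smul2 (xi u) (\<Sum>a\<in>Idx d. ketbra2 (a, wrap d (a + u)) (a, wrap d (a + u))))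
     + (\<Sum>u\<in>Idx d - {0}. smul2 (la u) (\<Sum>a\<in>Idx d. ketbra2 (a, wrap d (a + u)) (wrap d (a + u), a)))
     + smul2 eta (\<Sum>a\<in>Idx d. ketbra2 (a, a) (a, a))) p q = Form d xi la eta p q"
proof -
  have p12: "fst p \<in> Idx d" "snd p \<in> Idx d" using p by (auto simp: Idx2_def mem_Times_iff)
  have k1: "(\<Sum>a\<in>Idx d. if p = (a, wrap d (a + u)) \<and> q = (a, wrap d (a + u)) then 1 else 0) =
      (if q = p \<and> snd p = wrap d (fst p + u) then 1 else (0::complex))" for u
  proof -
    have "(\<Sum>a\<in>Idx d. if p = (a, wrap d (a + u)) \<and> q = (a, wrap d (a + u)) then 1 else (0::complex)) =
        (\<Sum>a\<in>Idx d. if a = fst p then (if q = p \<and> snd p = wrap d (fst p + u) then 1 else 0) else 0)"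
      by (intro sum.cong refl) (auto simp: prod_eq_iff)
    then show ?thesis using p12 by (simp add: sum.delta')
  qed
  have k2: "(\<Sum>a\<in>Idx d. if p = (a, wrap d (a + u)) \<and> q = (wrap d (a + u), a) then 1 else 0) =
      (if q = sw p \<and> snd p = wrap d (fst p + u) then 1 else (0::complex))" for u
  proof -
    have "(\<Sum>a\<in>Idx d. if p = (a, wrap d (a + u)) \<and> q = (wrap d (a + u), a) then 1 else (0::complex)) =
        (\<Sum>a\<in>Idx d. if a = fst p then (if q = sw p \<and> snd p = wrap d (fst p + u) then 1 else 0) else 0)"
      by (intro sum.cong refl) (auto simp: prod_eq_iff sw_def)
    then show ?thesis using p12 by (simp add: sum.delta')
  qed
  have k3: "(\<Sum>a\<in>Idx d. if p = (a, a) \<and> q = (a, a) then 1 else 0) =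
      (if q = p \<and> fst p = snd p then 1 else (0::complex))"
  proof -
    have "(\<Sum>a\<in>Idx d. if p = (a, a) \<and> q = (a, a) then 1 else (0::complex)) =
        (\<Sum>a\<in>Idx d. if a = fst p then (if q = p \<and> fst p = snd p then 1 else 0) else 0)"
      by (intro sum.cong refl) (auto simp: prod_eq_iff)
    then show ?thesis using p12 by (simp add: sum.delta')
  qed
  show ?thesis
    unfolding plus_apply2 sum_apply2 smul2_apply ketbra2_def k1 k2 k3 coef_sum[OF p]
    by (simp add: Form_def)
qed

end


lemma K_Tr: "X \<in> Kspace d \<Longrightarrow> Tr d X = 0"
proof -
  assume "X \<in> Kspace d"
  then have "hs_inner d Iop X = 0" by (simp add: Kspace_def)
  moreover have "hs_inner d Iop X = Tr d X"
    unfolding hs_inner_def Tr_def Iop_def by (simp add: if_distrib[of cnj] sum.delta cong: if_cong)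
  ultimately show ?thesis by simp
qed

lemma K_TF: "X \<in> Kspace d \<Longrightarrow> TF d X = 0"
proof -
  assume "X \<in> Kspace d"
  then have "hs_inner d Fop X = 0" by (simp add: Kspace_def)
  moreover have "hs_inner d Fop X = TF d X"
  proof -
    have "hs_inner d Fop X = (\<Sum>p\<in>Idx2 d. \<Sum>q\<in>Idx2 d. if p = sw q then X q p else 0)"
      unfolding hs_inner_def Fop_def by (intro sum.cong refl) (auto simp: sw_def split: prod.splits)
    also have "\<dots> = (\<Sum>q\<in>Idx2 d. \<Sum>p\<in>Idx2 d. if p = sw q then X q p else 0)" by (rule sum.swap)
    also have "\<dots> = TF d X" unfolding TF_def by (intro sum.cong refl) (simp add: sum.delta sw_Idx2)
    finally show ?thesis .
  qed
  ultimately show ?thesis by simp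
qed

context fixes d :: nat assumes d2: "d \<ge> 2" and ev: "even d"
begin

lemma zero_Idx: "0 \<in> Idx d" using d2 ev by (auto simp: Idx_def)

lemma sum_Idx2_wrap: "(\<Sum>p\<in>Idx2 d. f p) = (\<Sum>i\<in>Idx d. \<Sum>u\<in>Idx d. f (i, wrap d (i + u)))"
  unfolding sum_Idx2
proof (rule sum.cong[OF refl])
  fix i
  show "(\<Sum>j\<in>Idx d. f (i, j)) = (\<Sum>u\<in>Idx d. f (i, wrap d (i + u)))"
    using sum.reindex_bij_betw[OF wrap_bij[OF d2 ev, of i], of "\<lambda>j. f (i, j)"] by (simp add: add.commute)
qed

lemma sum_Sd: "(\<Sum>u\<in>Idx d. Sd d X u) = Tr d X"
  unfolding Tr_def sum_Idx2_wrap Sd_def by (rule sum.swap)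

lemma sum_Ld: "(\<Sum>u\<in>Idx d. Ld d X u) = TF d X"
  unfolding TF_def sum_Idx2_wrap Ld_def by (subst sum.swap) (simp add: sw_def)

lemma Form_at1:
  assumes i: "i \<in> Idx d" and u: "u \<in> Idx d"
  shows "Form d xi la eta (i, wrap d (i + u)) (i, wrap d (i + u)) = (if u \<noteq> 0 then xi u else eta)"
    and "Form d xi la eta (i, wrap d (i + u)) (wrap d (i + u), i) = (if u \<noteq> 0 then la u else eta)"
proof -
  have w: "wrap d (i + u) \<in> Idx d" by (rule wrap_in[OF d2 ev])
  have s: "wrap d (wrap d (i + u) - i) = u" using wrap_sol[OF d2 ev u i w] by simp
  have e: "i = wrap d (i + u) \<longleftrightarrow> u = 0"
    using wrap_sol[OF d2 ev u i i] wrap_id[OF d2 ev zero_Idx] by auto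
  show "Form d xi la eta (i, wrap d (i + u)) (i, wrap d (i + u)) = (if u \<noteq> 0 then xi u else eta)"
    using s e by (auto simp: Form_def sw_def)
  show "Form d xi la eta (i, wrap d (i + u)) (wrap d (i + u), i) = (if u \<noteq> 0 then la u else eta)"
    using s e by (auto simp: Form_def sw_def)
qed

lemma sum_if0: "(\<Sum>u\<in>Idx d. if u \<noteq> 0 then f u else c) = (\<Sum>u\<in>Idx d - {0}. f u) + (c::complex)"
proof -
  have "(\<Sum>u\<in>Idx d. if u \<noteq> 0 then f u else c) = (if (0::int) \<noteq> 0 then f 0 else c) + (\<Sum>u\<in>Idx d - {0}. if u \<noteq> 0 then f u else c)"
    by (rule sum.remove[OF fin_Idx zero_Idx])
  also have "(\<Sum>u\<in>Idx d - {0}. if u \<noteq> 0 then f u else c) = (\<Sum>u\<in>Idx d - {0}. f u)" by (rule sum.cong) auto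
  finally show ?thesis by simp
qed

lemma Form_quant:
  assumes Y: "\<forall>p\<in>Idx2 d. \<forall>q\<in>Idx2 d. Y p q = Form d xi la eta p q"
  shows "Dg d Y = of_nat d * eta"
    and "\<And>u. u \<in> Idx d - {0} \<Longrightarrow> Sd d Y u = of_nat d * xi u"
    and "\<And>u. u \<in> Idx d - {0} \<Longrightarrow> Ld d Y u = of_nat d * la u"
    and "Tr d Y = of_nat d * ((\<Sum>u\<in>Idx d - {0}. xi u) + eta)"
    and "TF d Y = of_nat d * ((\<Sum>u\<in>Idx d - {0}. la u) + eta)"
proof -
  have Y': "i \<in> Idx d \<Longrightarrow> j \<in> Idx d \<Longrightarrow> k \<in> Idx d \<Longrightarrow> l \<in> Idx d \<Longrightarrow> Y (i, j) (k, l) = Form d xi la eta (i, j) (k, l)" for i j k l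
    using Y by (auto simp: Idx2_def)
  have w: "wrap d (i + u) \<in> Idx d" for i u by (rule wrap_in[OF d2 ev])
  show "Dg d Y = of_nat d * eta"
    unfolding Dg_def using Y' by (simp add: Form_def card_Idx[OF d2 ev] sw_def)
  show "Sd d Y u = of_nat d * xi u" if u: "u \<in> Idx d - {0}" for u
  proof -
    have "Sd d Y u = (\<Sum>i\<in>Idx d. xi u)"
      unfolding Sd_def using u w by (intro sum.cong refl) (simp add: Y' Form_at1)
    then show ?thesis by (simp add: card_Idx[OF d2 ev])
  qed
  show "Ld d Y u = of_nat d * la u" if u: "u \<in> Idx d - {0}" for u
  proof -
    have "Ld d Y u = (\<Sum>i\<in>Idx d. la u)"
      unfolding Ld_def using u w by (intro sum.cong refl) (simp add: Y' Form_at1)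
    then show ?thesis by (simp add: card_Idx[OF d2 ev])
  qed
  show "Tr d Y = of_nat d * ((\<Sum>u\<in>Idx d - {0}. xi u) + eta)"
  proof -
    have "Tr d Y = (\<Sum>i\<in>Idx d. \<Sum>u\<in>Idx d. if u \<noteq> 0 then xi u else eta)"
      unfolding Tr_def sum_Idx2_wrap using w by (intro sum.cong refl) (simp add: Y' Form_at1)
    then show ?thesis by (simp add: sum_if0 card_Idx[OF d2 ev])
  qed
  show "TF d Y = of_nat d * ((\<Sum>u\<in>Idx d - {0}. la u) + eta)"
  proof -
    have "TF d Y = (\<Sum>i\<in>Idx d. \<Sum>u\<in>Idx d. if u \<noteq> 0 then la u else eta)"
      unfolding TF_def sum_Idx2_wrap using w by (intro sum.cong refl) (simp add: Y' Form_at1 sw_def)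
    then show ?thesis by (simp add: sum_if0 card_Idx[OF d2 ev])
  qed
qed

lemma Form_cong:
  assumes "\<And>u. u \<in> Idx d - {0} \<Longrightarrow> xi u = xi' u" "\<And>u. u \<in> Idx d - {0} \<Longrightarrow> la u = la' u" "eta = eta'"
    and p: "p \<in> Idx2 d"
  shows "Form d xi la eta p q = Form d xi' la' eta' p q"
  using assms wrap_ne0[OF d2 ev p] by (auto simp: Form_def)

end


definition xiL :: "nat \<Rightarrow> op2 \<Rightarrow> nat \<Rightarrow> int \<Rightarrow> complex" where
  "xiL d X l u = Sd d X u / of_nat d ^ (l + 1) + Dg d X / of_nat d ^ (l + 1) * ((1 - 1 / of_nat d ^ l) / (of_nat d - 1))"
definition laL :: "nat \<Rightarrow> op2 \<Rightarrow> nat \<Rightarrow> int \<Rightarrow> complex" where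
  "laL d X l u = Ld d X u / of_nat d ^ (l + 1) + Dg d X / of_nat d ^ (l + 1) * ((1 - 1 / of_nat d ^ l) / (of_nat d - 1))"
definition etaL :: "nat \<Rightarrow> op2 \<Rightarrow> nat \<Rightarrow> complex" where
  "etaL d X l = Dg d X / of_nat d ^ (2 * l + 1)"

lemma alg_step:
  fixes c S D :: complex
  assumes c0: "c \<noteq> 0" and c1: "c \<noteq> 1"
  shows "(c * (S / c ^ (l + 1) + D / c ^ (l + 1) * ((1 - 1 / c ^ l) / (c - 1)))) / c ^ 2 + (c * (D / c ^ (2 * l + 1))) / c ^ 3
       = S / c ^ (Suc l + 1) + D / c ^ (Suc l + 1) * ((1 - 1 / c ^ Suc l) / (c - 1))"
proof -
  define x where "x = c ^ l"
  have x0: "x \<noteq> 0" using c0 by (simp add: x_def)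
  have c1': "c - 1 \<noteq> 0" using c1 by simp
  have e1: "c ^ (l + 1) = c * x" "c ^ (2 * l + 1) = c * x * x" "c ^ (Suc l + 1) = c * c * x" "c ^ Suc l = c * x" "c ^ l = x"
    unfolding x_def by (simp_all add: mult.assoc) (metis mult_2 power_add power_Suc Suc_eq_plus1)
  show ?thesis unfolding e1 using c0 x0 c1'
    by (simp add: field_simps power2_eq_square power3_eq_cube)
qed

lemma alg_tr:
  fixes c S D :: complex
  assumes c0: "c \<noteq> 0" and c1: "c \<noteq> 1"
  shows "(- D) / c ^ (l + 1) + (c - 1) * (D / c ^ (l + 1) * ((1 - 1 / c ^ l) / (c - 1))) + D / c ^ (2 * l + 1) = 0"
proof -
  define x where "x = c ^ l"
  have x0: "x \<noteq> 0" using c0 by (simp add: x_def)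
  have c1': "c - 1 \<noteq> 0" using c1 by simp
  have e1: "c ^ (l + 1) = c * x" "c ^ (2 * l + 1) = c * x * x" "c ^ l = x"
    unfolding x_def by (simp_all add: mult.assoc) (metis mult_2 power_add power_Suc Suc_eq_plus1)
  show ?thesis unfolding e1 using c0 x0 c1'
    by (simp add: field_simps)
qed

context fixes d :: nat assumes d2: "d \<ge> 2" and ev: "even d"
begin

lemma Ld_0: "Ld d X 0 = Dg d X"
  unfolding Ld_def Dg_def by (intro sum.cong refl) (simp add: wrap_id[OF d2 ev])

lemma card_Idx0: "of_nat (card (Idx d - {0})) = (of_nat d - 1 :: complex)"
  using card_Idx[OF d2 ev] zero_Idx[OF d2 ev] d2 by (simp add: card_Diff_singleton of_nat_diff)

lemma sum_Idx0: "(\<Sum>u\<in>Idx d - {0}. f u) = (\<Sum>u\<in>Idx d. f u) - (f 0 :: complex)"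
  using sum.remove[OF fin_Idx zero_Idx[OF d2 ev], of f] by simp

lemma main_ind:
  assumes K: "X \<in> Kspace d"
  shows "\<forall>p\<in>Idx2 d. \<forall>q\<in>Idx2 d. (Rmap d ^^ Suc n) X p q = Form d (xiL d X (Suc n)) (laL d X (Suc n)) (etaL d X (Suc n)) p q"
proof (induct n)
  have c0: "(of_nat d :: complex) \<noteq> 0" and c1: "(of_nat d :: complex) \<noteq> 1" and c1': "(of_nat d :: complex) - 1 \<noteq> 0"
    using d2 by auto
  case 0
  show ?case
  proof (intro ballI)
    fix p q assume p: "p \<in> Idx2 d" and q: "q \<in> Idx2 d"
    have "(Rmap d ^^ Suc 0) X p q = Rmap d X p q" by simp
    also have "\<dots> = Form d (\<lambda>u. Sd d X u / of_nat d ^ 2 + Dg d X / of_nat d ^ 3)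
                               (\<lambda>u. Ld d X u / of_nat d ^ 2 + Dg d X / of_nat d ^ 3)
                               (Dg d X / of_nat d ^ 3) p q"
      by (rule one_step[OF d2 ev K_Tr[OF K] K_TF[OF K] p q])
    also have "\<dots> = Form d (xiL d X (Suc 0)) (laL d X (Suc 0)) (etaL d X (Suc 0)) p q"
      by (rule Form_cong[OF d2 ev _ _ _ p]) (use c0 c1' in \<open>simp_all add: xiL_def laL_def etaL_def field_simps power2_eq_square power3_eq_cube\<close>)
    finally show "(Rmap d ^^ Suc 0) X p q = Form d (xiL d X (Suc 0)) (laL d X (Suc 0)) (etaL d X (Suc 0)) p q" .
  qed
next
  have c0: "(of_nat d :: complex) \<noteq> 0" and c1: "(of_nat d :: complex) \<noteq> 1"
    using d2 by auto
  case (Suc n)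
  define l where "l = Suc n"
  define Y where "Y = (Rmap d ^^ l) X"
  have IH: "\<forall>p\<in>Idx2 d. \<forall>q\<in>Idx2 d. Y p q = Form d (xiL d X l) (laL d X l) (etaL d X l) p q"
    using Suc unfolding Y_def l_def .
  note FQ = Form_quant[OF d2 ev IH]
  have TrX: "Tr d X = 0" and TFX: "TF d X = 0" using K_Tr[OF K] K_TF[OF K] .
  have "Tr d Y = of_nat d * ((\<Sum>u\<in>Idx d - {0}. xiL d X l u) + etaL d X l)" by (rule FQ(4))
  also have "(\<Sum>u\<in>Idx d - {0}. xiL d X l u) = (\<Sum>u\<in>Idx d - {0}. Sd d X u) / of_nat d ^ (l + 1)
       + (of_nat d - 1) * (Dg d X / of_nat d ^ (l + 1) * ((1 - 1 / of_nat d ^ l) / (of_nat d - 1)))"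
    unfolding xiL_def sum.distrib sum_divide_distrib[symmetric] by (simp add: card_Idx0)
  also have "(\<Sum>u\<in>Idx d - {0}. Sd d X u) = - Dg d X"
    unfolding sum_Idx0 sum_Sd[OF d2 ev] Sd_0[OF d2 ev] TrX by simp
  finally have TrY: "Tr d Y = 0" using alg_tr[OF c0 c1, where D="Dg d X" and l=l] by (simp add: etaL_def)
  have "TF d Y = of_nat d * ((\<Sum>u\<in>Idx d - {0}. laL d X l u) + etaL d X l)" by (rule FQ(5))
  also have "(\<Sum>u\<in>Idx d - {0}. laL d X l u) = (\<Sum>u\<in>Idx d - {0}. Ld d X u) / of_nat d ^ (l + 1)
       + (of_nat d - 1) * (Dg d X / of_nat d ^ (l + 1) * ((1 - 1 / of_nat d ^ l) / (of_nat d - 1)))"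
    unfolding laL_def sum.distrib sum_divide_distrib[symmetric] by (simp add: card_Idx0)
  also have "(\<Sum>u\<in>Idx d - {0}. Ld d X u) = - Dg d X"
    unfolding sum_Idx0 sum_Ld[OF d2 ev] Ld_0 TFX by simp
  finally have TFY: "TF d Y = 0" using alg_tr[OF c0 c1, where D="Dg d X" and l=l] by (simp add: etaL_def)
  show ?case
  proof (intro ballI)
    fix p q assume p: "p \<in> Idx2 d" and q: "q \<in> Idx2 d"
    have "(Rmap d ^^ Suc (Suc n)) X p q = Rmap d Y p q" by (simp add: Y_def l_def)
    also have "\<dots> = Form d (\<lambda>u. Sd d Y u / of_nat d ^ 2 + Dg d Y / of_nat d ^ 3)
                               (\<lambda>u. Ld d Y u / of_nat d ^ 2 + Dg d Y / of_nat d ^ 3)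
                               (Dg d Y / of_nat d ^ 3) p q"
      by (rule one_step[OF d2 ev TrY TFY p q])
    also have "\<dots> = Form d (xiL d X (Suc l)) (laL d X (Suc l)) (etaL d X (Suc l)) p q"
    proof (rule Form_cong[OF d2 ev _ _ _ p])
      fix u assume u: "u \<in> Idx d - {0}"
      show "Sd d Y u / of_nat d ^ 2 + Dg d Y / of_nat d ^ 3 = xiL d X (Suc l) u"
        unfolding FQ(2)[OF u] FQ(1) xiL_def etaL_def using alg_step[OF c0 c1, where S="Sd d X u" and D="Dg d X" and l=l] by simp
      show "Ld d Y u / of_nat d ^ 2 + Dg d Y / of_nat d ^ 3 = laL d X (Suc l) u"
        unfolding FQ(3)[OF u] FQ(1) laL_def etaL_def using alg_step[OF c0 c1, where S="Ld d X u" and D="Dg d X" and l=l] by simp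
    next
      show "Dg d Y / of_nat d ^ 3 = etaL d X (Suc l)"
        unfolding FQ(1) etaL_def using c0 by (simp add: field_simps power_add power3_eq_cube)
    qed
    finally show "(Rmap d ^^ Suc (Suc n)) X p q = Form d (xiL d X (Suc (Suc n))) (laL d X (Suc (Suc n))) (etaL d X (Suc (Suc n))) p q"
      by (simp add: l_def)
  qed
qed

end


theorem lemma6:
  fixes d :: nat and X :: op2 and l :: nat
  assumes "d \<ge> 2" and "even d"
    and "X \<in> Kspace d"
    and "l \<ge> 1"
  shows "\<forall>p\<in>Idx2 d. \<forall>q\<in>Idx2 d.
    (Rmap d ^^ l) X p q =
    ((\<Sum>u\<in>Idx d - {0}.
        smul2 ((\<Sum>i\<in>Idx d. X (i, wrap d (i + u)) (i, wrap d (i + u))) / of_nat d ^ (l + 1)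
               + (\<Sum>i\<in>Idx d. X (i, i) (i, i)) / of_nat d ^ (l + 1)
                 * ((1 - 1 / of_nat d ^ l) / (of_nat d - 1)))
          (\<Sum>a\<in>Idx d. ketbra2 (a, wrap d (a + u)) (a, wrap d (a + u))))
     + (\<Sum>u\<in>Idx d - {0}.
        smul2 ((\<Sum>i\<in>Idx d. X (i, wrap d (i + u)) (wrap d (i + u), i)) / of_nat d ^ (l + 1)
               + (\<Sum>i\<in>Idx d. X (i, i) (i, i)) / of_nat d ^ (l + 1)
                 * ((1 - 1 / of_nat d ^ l) / (of_nat d - 1)))
          (\<Sum>a\<in>Idx d. ketbra2 (a, wrap d (a + u)) (wrap d (a + u), a)))
     + smul2 ((\<Sum>i\<in>Idx d. X (i, i) (i, i)) / of_nat d ^ (2 * l + 1))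
          (\<Sum>a\<in>Idx d. ketbra2 (a, a) (a, a))) p q"
proof (intro ballI)
  fix p q assume p: "p \<in> Idx2 d" and q: "q \<in> Idx2 d"
  obtain n where l: "l = Suc n" using assms(4) by (cases l) auto
  have "(Rmap d ^^ l) X p q = Form d (xiL d X l) (laL d X l) (etaL d X l) p q"
    using main_ind[OF assms(1,2,3), of n] l p q by auto
  also have "\<dots> = ((\<Sum>u\<in>Idx d - {0}. smul2 (xiL d X l u) (\<Sum>a\<in>Idx d. ketbra2 (a, wrap d (a + u)) (a, wrap d (a + u))))
     + (\<Sum>u\<in>Idx d - {0}. smul2 (laL d X l u) (\<Sum>a\<in>Idx d. ketbra2 (a, wrap d (a + u)) (wrap d (a + u), a)))
     + smul2 (etaL d X l) (\<Sum>a\<in>Idx d. ketbra2 (a, a) (a, a))) p q"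
    by (rule rhs_eval[OF assms(1,2) p q, symmetric])
  finally show "(Rmap d ^^ l) X p q =
    ((\<Sum>u\<in>Idx d - {0}.
        smul2 ((\<Sum>i\<in>Idx d. X (i, wrap d (i + u)) (i, wrap d (i + u))) / of_nat d ^ (l + 1)
               + (\<Sum>i\<in>Idx d. X (i, i) (i, i)) / of_nat d ^ (l + 1)
                 * ((1 - 1 / of_nat d ^ l) / (of_nat d - 1)))
          (\<Sum>a\<in>Idx d. ketbra2 (a, wrap d (a + u)) (a, wrap d (a + u))))
     + (\<Sum>u\<in>Idx d - {0}.
        smul2 ((\<Sum>i\<in>Idx d. X (i, wrap d (i + u)) (wrap d (i + u), i)) / of_nat d ^ (l + 1)
               + (\<Sum>i\<in>Idx d. X (i, i) (i, i)) / of_nat d ^ (l + 1)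
                 * ((1 - 1 / of_nat d ^ l) / (of_nat d - 1)))
          (\<Sum>a\<in>Idx d. ketbra2 (a, wrap d (a + u)) (wrap d (a + u), a)))
     + smul2 ((\<Sum>i\<in>Idx d. X (i, i) (i, i)) / of_nat d ^ (2 * l + 1))
          (\<Sum>a\<in>Idx d. ketbra2 (a, a) (a, a))) p q"
    unfolding xiL_def laL_def etaL_def Sd_def Ld_def Dg_def .
qed


end
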